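(* Let $a,\Theta$ be finitely supported complex sequences on $\mathbb Z$ with $\Theta^\star=\Theta$, and let $b_1,b_2$ be finitely supported complex sequences such that $\{a;b_1,b_2\}_{\Theta,(1,-1)}$ is a quasi-tight framelet filter bank and $$\mathrm{S}\Theta(z)=1,\quad \mathrm{S}a(z)=\epsilon z^c,\quad \mathrm{S}b_1(z)=\epsilon_1z^{c_1},\quad \mathrm{S}b_2(z)=\epsilon_2z^{c_2}$$ for some $\epsilon,\epsilon_1,\epsilon_2\in\{\pm1\}$ and $c,c_1,c_2\in\mathbb Z$. Then $c_1+c$ and $c_2+c$ are even.
   Context: Finitely supported sequences $u$ on $\mathbb Z$ are identified with Laurent polynomials $u(z)=\sum_ku(k)z^k$; $u^\star(z):=\sum_k\overline{u(k)}z^{-k}$. $u$ has symmetry of type $\epsilon z^c$ if $u(z)=\epsilon z^cu(z^{-1})$; for nonzero $u$, $\mathrm{S}u(z):=u(z)/u(z^{-1})$; zero has every type. $\{a;b_1,b_2\}_{\Theta,(1,-1)}$ is a quasi-tight framelet filter bank if for all $z\in\mathbb C\setminus\{0\}$: $\Theta(z^2)a^\star(z)a(z)+b_1^\star(z)b_1(z)-b_2^\star(z)b_2(z)=\Theta(z)$ and $\Theta(z^2)a^\star(z)a(-z)+b_1^\star(z)b_1(-z)-b_2^\star(z)b_2(-z)=0$. *)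

theory Defs
  imports Complex_Main
begin

text \<open>Finitely supported sequences on the integers, identified with Laurent polynomials.\<close>

definition fin_supp :: "(int \<Rightarrow> complex) \<Rightarrow> bool" where
  "fin_supp u \<longleftrightarrow> finite {k. u k \<noteq> 0}"

definition lp_eval :: "(int \<Rightarrow> complex) \<Rightarrow> complex \<Rightarrow> complex" where
  "lp_eval u z = (\<Sum>k\<in>{k. u k \<noteq> 0}. u k * z powi k)"

text \<open>u^star(z) = sum_k conj(u(k)) z^(-k), i.e. the sequence k maps to conj(u(-k)).\<close>
definition lp_star :: "(int \<Rightarrow> complex) \<Rightarrow> (int \<Rightarrow> complex)" where
  "lp_star u = (\<lambda>k. cnj (u (- k)))"

text \<open>Su(z) = eps z^c, for nonzero u: u(z)/u(1/z) = eps z^c as rational functions,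
  i.e. u(z) = eps z^c u(1/z) for all nonzero z.\<close>
definition S_eq :: "(int \<Rightarrow> complex) \<Rightarrow> complex \<Rightarrow> int \<Rightarrow> bool" where
  "S_eq u eps c \<longleftrightarrow> u \<noteq> (\<lambda>_. 0) \<and>
     (\<forall>z. z \<noteq> 0 \<longrightarrow> lp_eval u z = eps * z powi c * lp_eval u (inverse z))"

definition quasi_tight_fb ::
  "(int \<Rightarrow> complex) \<Rightarrow> (int \<Rightarrow> complex) \<Rightarrow> (int \<Rightarrow> complex) \<Rightarrow> (int \<Rightarrow> complex) \<Rightarrow> bool" where
  "quasi_tight_fb \<Theta> a b1 b2 \<longleftrightarrow>
     (\<forall>z::complex. z \<noteq> 0 \<longrightarrow>
        lp_eval \<Theta> (z^2) * lp_eval (lp_star a) z * lp_eval a z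
        + lp_eval (lp_star b1) z * lp_eval b1 z
        - lp_eval (lp_star b2) z * lp_eval b2 z = lp_eval \<Theta> z
      \<and> lp_eval \<Theta> (z^2) * lp_eval (lp_star a) z * lp_eval a (- z)
        + lp_eval (lp_star b1) z * lp_eval b1 (- z)
        - lp_eval (lp_star b2) z * lp_eval b2 (- z) = 0)"

end

theory Submission
  imports Defs "HOL-Computational_Algebra.Polynomial"
begin

lemma lp_poly:
  assumes "fin_supp u" "u \<noteq> (\<lambda>_. 0)"
  shows "\<exists>p (N::nat). p \<noteq> 0 \<and> (\<forall>z. z \<noteq> 0 \<longrightarrow> poly p z = z^N * lp_eval u z)"
proof -
  define S where "S = {k. u k \<noteq> 0}"
  have fS: "finite S" using assms(1) unfolding fin_supp_def S_def by simp
  define N where "N = (\<Sum>k\<in>S. nat \<bar>k\<bar>)"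
  have bnd: "k + int N \<ge> 0" if "k \<in> S" for k
  proof -
    have "nat \<bar>k\<bar> \<le> N" unfolding N_def using fS that by (intro member_le_sum) auto
    then show ?thesis by linarith
  qed
  define p where "p = (\<Sum>k\<in>S. monom (u k) (nat (k + int N)))"
  obtain k0 where k0: "u k0 \<noteq> 0" using assms(2) by blast
  have k0S: "k0 \<in> S" using k0 S_def by simp
  have "coeff p (nat (k0 + int N)) = (\<Sum>k\<in>S. if nat (k + int N) = nat (k0 + int N) then u k else 0)"
    unfolding p_def by (simp add: coeff_sum)
  also have "\<dots> = (\<Sum>k\<in>S. if k = k0 then u k else 0)"
    proof (rule sum.cong)
    fix k assume "k \<in> S"
    then have "nat (k + int N) = nat (k0 + int N) \<longleftrightarrow> k = k0" using bnd[OF \<open>k \<in> S\<close>] bnd[OF k0S] by linarith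
    then show "(if nat (k + int N) = nat (k0 + int N) then u k else 0) = (if k = k0 then u k else 0)" by simp
  qed simp
  also have "\<dots> = u k0" using fS k0S by simp
  finally have "p \<noteq> 0" using k0 by auto
  moreover have "poly p z = z^N * lp_eval u z" if "z \<noteq> 0" for z
  proof -
    have "poly p z = (\<Sum>k\<in>S. u k * z ^ nat (k + int N))"
      unfolding p_def by (simp add: poly_sum poly_monom)
    also have "\<dots> = (\<Sum>k\<in>S. z^N * (u k * z powi k))"
    proof (rule sum.cong)
      fix k assume "k \<in> S"
      then have "z ^ nat (k + int N) = z powi (k + int N)" using bnd
        by (simp add: power_int_def)
      also have "\<dots> = z powi k * z^N" using that by (simp add: power_int_add)
      finally show "u k * z ^ nat (k + int N) = z^N * (u k * z powi k)" by simp
    qed simp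
    also have "\<dots> = z^N * lp_eval u z" unfolding lp_eval_def S_def by (simp add: sum_distrib_left)
    finally show ?thesis .
  qed
  ultimately show ?thesis by blast
qed

lemma star_fin: "fin_supp u \<Longrightarrow> fin_supp (lp_star u)"
proof -
  assume "fin_supp u"
  have "{k. lp_star u k \<noteq> 0} = uminus ` {k. u k \<noteq> 0}"
    unfolding lp_star_def by (auto simp: image_iff) (metis minus_minus)
  then show ?thesis using \<open>fin_supp u\<close> unfolding fin_supp_def by simp
qed

lemma star_nz: "u \<noteq> (\<lambda>_. 0) \<Longrightarrow> lp_star u \<noteq> (\<lambda>_. 0)"
proof
  assume "u \<noteq> (\<lambda>_. 0)" "lp_star u = (\<lambda>_. 0)"
  then obtain k where "u k \<noteq> 0" by blast
  moreover have "lp_star u (-k) = 0" using \<open>lp_star u = _\<close> by simp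
  ultimately show False unfolding lp_star_def by simp
qed

lemma star_eval:
  assumes "z \<noteq> 0"
  shows "lp_eval (lp_star u) z = cnj (lp_eval u (cnj (inverse z)))"
proof -
  have set: "{k. lp_star u k \<noteq> 0} = uminus ` {k. u k \<noteq> 0}"
    unfolding lp_star_def by (auto simp: image_iff) (metis minus_minus)
  have "lp_eval (lp_star u) z = (\<Sum>k\<in>{k. u k \<noteq> 0}. lp_star u (-k) * z powi (-k))"
    unfolding lp_eval_def set by (subst sum.reindex) (auto intro: inj_onI)
  also have "\<dots> = (\<Sum>k\<in>{k. u k \<noteq> 0}. cnj (u k * (cnj (inverse z)) powi k))"
    unfolding lp_star_def by (simp add: power_int_minus power_int_inverse)
  also have "\<dots> = cnj (lp_eval u (cnj (inverse z)))"
    unfolding lp_eval_def by simp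
  finally show ?thesis .
qed


lemma powi_m1: "(-1::complex) powi c = (if even c then 1 else -1)"
proof (cases "c \<ge> 0")
  case True
  then show ?thesis by (simp add: power_int_def even_nat_iff)
next
  case False
  then show ?thesis by (simp add: power_int_def even_nat_iff)
qed

lemma sym_prod:
  assumes "S_eq u e c" "e \<in> {1, -1}" "z \<noteq> 0"
  shows "lp_eval (lp_star u) (inverse z) * lp_eval u (- inverse z)
       = (-1) powi c * (lp_eval (lp_star u) z * lp_eval u (- z))"
proof -
  have S: "\<And>w. w \<noteq> 0 \<Longrightarrow> lp_eval u w = e * w powi c * lp_eval u (inverse w)"
    using assms(1) unfolding S_eq_def by blast
  have e2: "e * e = 1" "cnj e = e" using assms(2) by auto
  have zc: "z powi c \<noteq> 0" using assms(3) by simp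
  have m1: "(-1::complex) powi c * (-1) powi c = 1"
    by (simp add: powi_m1)
  have "lp_eval u (- z) = e * (-z) powi c * lp_eval u (- inverse z)"
    using S[of "-z"] assms(3) by simp
  also have "(-z) powi c = (-1) powi c * z powi c"
    by (metis mult_minus1 power_int_mult_distrib)
  finally have A: "lp_eval u (- inverse z) = e * (-1) powi c * lp_eval u (- z) / z powi c"
    using e2 m1 zc by (simp add: field_simps) (metis (no_types, lifting) mult.assoc mult.left_commute mult_1)
  have "lp_eval (lp_star u) (inverse z) = cnj (lp_eval u (cnj z))"
    using star_eval[of "inverse z" u] assms(3) by simp
  also have "\<dots> = cnj (e * cnj z powi c * lp_eval u (inverse (cnj z)))"
    using S[of "cnj z"] assms(3) by simp
  also have "\<dots> = e * z powi c * lp_eval (lp_star u) z"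
    using star_eval[of z u] assms(3) e2 by (simp add: complex_cnj_inverse)
  finally have B: "lp_eval (lp_star u) (inverse z) = e * z powi c * lp_eval (lp_star u) z" .
  show ?thesis unfolding A B using zc e2 assms(3) by (simp add: field_simps)
qed



lemma lp_poly_neg:
  assumes "fin_supp u" "u \<noteq> (\<lambda>_. 0)"
  shows "\<exists>p (N::nat). p \<noteq> 0 \<and> (\<forall>z. z \<noteq> 0 \<longrightarrow> poly p z = z^N * lp_eval u (- z))"
proof -
  obtain p N where p: "p \<noteq> 0" "\<And>z. z \<noteq> 0 \<Longrightarrow> poly p z = z^N * lp_eval u z"
    using lp_poly[OF assms] by blast
  have "pcompose p [:0, -1:] \<noteq> 0" using p(1) pcompose_eq_0[of p "[:0, -1:]"] by auto
  moreover have "poly (smult ((-1)^N) (pcompose p [:0, -1:])) z = z^N * lp_eval u (- z)" if "z \<noteq> 0" for z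
  proof -
    have "poly (pcompose p [:0, -1:]) z = poly p (-z)" by (simp add: poly_pcompose)
    also have "\<dots> = (-z)^N * lp_eval u (- z)" using p(2)[of "-z"] that by simp
    also have "(-z)^N = (-1)^N * z^N" by (rule power_minus)
    finally have "poly (pcompose p [:0, -1:]) z = (-1)^N * z^N * lp_eval u (- z)" .
    then have "poly (smult ((-1)^N) (pcompose p [:0, -1:])) z = ((-1)^N * (-1)^N) * z^N * lp_eval u (- z)"
      by (simp only: poly_smult mult.assoc)
    also have "(-1::complex)^N * (-1)^N = 1" by (simp flip: power_add)
    finally show ?thesis by simp
  qed
  ultimately show ?thesis by (intro exI[of _ "smult ((-1)^N) (pcompose p [:0, -1:])"] exI[of _ N]) auto
qed

lemma lp_poly_sq:
  assumes "fin_supp u" "u \<noteq> (\<lambda>_. 0)"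
  shows "\<exists>p (N::nat). p \<noteq> 0 \<and> (\<forall>z. z \<noteq> 0 \<longrightarrow> poly p z = (z^2)^N * lp_eval u (z^2))"
proof -
  obtain p N where p: "p \<noteq> 0" "\<And>z. z \<noteq> 0 \<Longrightarrow> poly p z = z^N * lp_eval u z"
    using lp_poly[OF assms] by blast
  have "pcompose p (monom 1 2) \<noteq> 0" using p(1) pcompose_eq_0[of p "monom 1 2"] by (auto simp: degree_monom_eq)
  moreover have "poly (pcompose p (monom 1 2)) z = (z^2)^N * lp_eval u (z^2)" if "z \<noteq> 0" for z
    using p(2)[of "z^2"] that by (simp add: poly_pcompose poly_monom)
  ultimately show ?thesis by blast
qed

theorem theorem4p2:
  fixes a \<Theta> b1 b2 :: "int \<Rightarrow> complex"
    and eps eps1 eps2 :: complex and c c1 c2 :: int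
  assumes "fin_supp a" and "fin_supp \<Theta>" and "fin_supp b1" and "fin_supp b2"
    and "lp_star \<Theta> = \<Theta>"
    and "quasi_tight_fb \<Theta> a b1 b2"
    and "S_eq \<Theta> 1 0"
    and "S_eq a eps c" and "S_eq b1 eps1 c1" and "S_eq b2 eps2 c2"
    and "eps \<in> {1, -1}" and "eps1 \<in> {1, -1}" and "eps2 \<in> {1, -1}"
  shows "even (c1 + c) \<and> even (c2 + c)"
proof -
  have nz: "\<Theta> \<noteq> (\<lambda>_. 0)" "a \<noteq> (\<lambda>_. 0)" "b1 \<noteq> (\<lambda>_. 0)" "b2 \<noteq> (\<lambda>_. 0)"
    using assms(7-10) unfolding S_eq_def by auto
  obtain p0 n0 where p0: "p0 \<noteq> 0" "\<And>z. z \<noteq> 0 \<Longrightarrow> poly p0 z = (z^2)^n0 * lp_eval \<Theta> (z^2)"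
    using lp_poly_sq[OF assms(2) nz(1)] by blast
  obtain p1 n1 where p1: "p1 \<noteq> 0" "\<And>z. z \<noteq> 0 \<Longrightarrow> poly p1 z = z^n1 * lp_eval (lp_star a) z"
    using lp_poly[OF star_fin[OF assms(1)] star_nz[OF nz(2)]] by blast
  obtain p2 n2 where p2: "p2 \<noteq> 0" "\<And>z. z \<noteq> 0 \<Longrightarrow> poly p2 z = z^n2 * lp_eval a (- z)"
    using lp_poly_neg[OF assms(1) nz(2)] by blast
  obtain p3 n3 where p3: "p3 \<noteq> 0" "\<And>z. z \<noteq> 0 \<Longrightarrow> poly p3 z = z^n3 * lp_eval (lp_star b1) z"
    using lp_poly[OF star_fin[OF assms(3)] star_nz[OF nz(3)]] by blast
  obtain p4 n4 where p4: "p4 \<noteq> 0" "\<And>z. z \<noteq> 0 \<Longrightarrow> poly p4 z = z^n4 * lp_eval b1 (- z)"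
    using lp_poly_neg[OF assms(3) nz(3)] by blast
  obtain p5 n5 where p5: "p5 \<noteq> 0" "\<And>z. z \<noteq> 0 \<Longrightarrow> poly p5 z = z^n5 * lp_eval (lp_star b2) z"
    using lp_poly[OF star_fin[OF assms(4)] star_nz[OF nz(4)]] by blast
  obtain p6 n6 where p6: "p6 \<noteq> 0" "\<And>z. z \<noteq> 0 \<Longrightarrow> poly p6 z = z^n6 * lp_eval b2 (- z)"
    using lp_poly_neg[OF assms(4) nz(4)] by blast
  define P where "P = p0 * p1 * p2 * p3 * p4 * p5 * p6"
  have "P \<noteq> 0" unfolding P_def using p0 p1 p2 p3 p4 p5 p6 by simp
  then have "finite (insert 0 {x. poly P x = 0})" using poly_roots_finite by blast
  then obtain z where "z \<notin> insert 0 {x. poly P x = 0}"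
    using ex_new_if_finite[OF infinite_UNIV_char_0] by blast
  then have z: "z \<noteq> 0" "poly P z \<noteq> 0" by auto
  then have "poly p0 z \<noteq> 0" "poly p1 z \<noteq> 0" "poly p2 z \<noteq> 0" "poly p3 z \<noteq> 0"
     "poly p4 z \<noteq> 0" "poly p5 z \<noteq> 0" "poly p6 z \<noteq> 0" unfolding P_def by auto
  then have "lp_eval \<Theta> (z^2) \<noteq> 0" "lp_eval (lp_star a) z * lp_eval a (- z) \<noteq> 0"
    "lp_eval (lp_star b1) z * lp_eval b1 (- z) \<noteq> 0" "lp_eval (lp_star b2) z * lp_eval b2 (- z) \<noteq> 0"
    using p0(2) p1(2) p2(2) p3(2) p4(2) p5(2) p6(2) z(1) by auto
  then have T: "lp_eval \<Theta> (z^2) * (lp_eval (lp_star a) z * lp_eval a (- z)) \<noteq> 0"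
    "lp_eval (lp_star b1) z * lp_eval b1 (- z) \<noteq> 0" "lp_eval (lp_star b2) z * lp_eval b2 (- z) \<noteq> 0"
    by auto
  define T0 where "T0 = lp_eval \<Theta> (z^2) * (lp_eval (lp_star a) z * lp_eval a (- z))"
  define T1 where "T1 = lp_eval (lp_star b1) z * lp_eval b1 (- z)"
  define T2 where "T2 = lp_eval (lp_star b2) z * lp_eval b2 (- z)"
  have iz: "inverse z \<noteq> 0" using z(1) by simp
  have E1: "T0 + T1 - T2 = 0"
  proof -
    have F: "lp_eval \<Theta> (z^2) * lp_eval (lp_star a) z * lp_eval a z
        + lp_eval (lp_star b1) z * lp_eval b1 z
        - lp_eval (lp_star b2) z * lp_eval b2 z = lp_eval \<Theta> z
      \<and> lp_eval \<Theta> (z^2) * lp_eval (lp_star a) z * lp_eval a (- z)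
        + lp_eval (lp_star b1) z * lp_eval b1 (- z)
        - lp_eval (lp_star b2) z * lp_eval b2 (- z) = 0"
      using assms(6) z(1) unfolding quasi_tight_fb_def by blast
    then show ?thesis unfolding T0_def T1_def T2_def by (simp only: mult.assoc)
  qed
  have E2': "lp_eval \<Theta> ((inverse z)^2) * lp_eval (lp_star a) (inverse z) * lp_eval a (- inverse z)
        + lp_eval (lp_star b1) (inverse z) * lp_eval b1 (- inverse z)
        - lp_eval (lp_star b2) (inverse z) * lp_eval b2 (- inverse z) = 0"
    using assms(6) iz unfolding quasi_tight_fb_def by blast
  have th: "lp_eval \<Theta> ((inverse z)^2) = lp_eval \<Theta> (z^2)"
  proof -
    have "z^2 \<noteq> 0" using z(1) by simp
    then have "lp_eval \<Theta> (z^2) = 1 * (z^2) powi 0 * lp_eval \<Theta> (inverse (z^2))"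
      using assms(7) unfolding S_eq_def by blast
    then show ?thesis by (simp add: power_inverse)
  qed
  have E2: "(-1) powi c * T0 + (-1) powi c1 * T1 - (-1) powi c2 * T2 = 0"
    using E2' unfolding th mult.assoc sym_prod[OF assms(8) assms(11) z(1)]
      sym_prod[OF assms(9) assms(12) z(1)] sym_prod[OF assms(10) assms(13) z(1)]
    unfolding T0_def T1_def T2_def by (simp add: algebra_simps)
  show ?thesis
  proof (rule ccontr)
    assume H: "\<not> ?thesis"
    have T0e: "T0 = T2 - T1" using E1 by (simp add: algebra_simps)
    have E3: "((-1) powi c1 - (-1) powi c) * T1 + ((-1) powi c - (-1) powi c2) * T2 = 0"
      using E2 unfolding T0e by (simp add: algebra_simps)
    have T': "T0 \<noteq> 0" "T1 \<noteq> 0" "T2 \<noteq> 0" using T unfolding T0_def T1_def T2_def by auto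
    have ev: "even (x + y) \<longleftrightarrow> (even x \<longleftrightarrow> even y)" for x y :: int by auto
    show False
    proof (cases "even c1 = even c")
      case True
      then have "even c2 \<noteq> even c" using H ev by auto
      then have "((-1::complex) powi c - (-1) powi c2) \<noteq> 0" by (auto simp: powi_m1)
      moreover have "(-1::complex) powi c1 - (-1) powi c = 0" using True by (auto simp: powi_m1)
      ultimately show False using E3 T'(3) by simp
    next
      case False
      show False
      proof (cases "even c2 = even c")
        case True
        then have "((-1::complex) powi c1 - (-1) powi c) \<noteq> 0" using False by (auto simp: powi_m1)
        moreover have "(-1::complex) powi c - (-1) powi c2 = 0" using True by (auto simp: powi_m1)
        ultimately show False using E3 T'(2) by simp
      next
        case F2: False
        have "T1 = T2" using E3 False F2
          by (cases "even c"; cases "even c1"; cases "even c2"; simp add: powi_m1; algebra)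
        then show False using T0e T'(1) by simp
      qed
    qed
  qed
qed

end
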